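(* Let $\Delta>0$, $\varepsilon_{\mathrm{opt}}<\Delta$ and $b'=b+\Delta$. Let $\bar\pi$ be a policy with $\hat V^{\bar\pi}_{r_p}(\rho)\ge\hat V^{\hat\pi^*}_{r_p}(\rho)-\varepsilon_{\mathrm{opt}}$ and $\hat V^{\bar\pi}_c(\rho)\ge b'-\varepsilon_{\mathrm{opt}}$ (e.g. the output $\bar\pi_T$ of the primal-dual algorithm under the conditions of its guarantee). Suppose $$|V^{\bar\pi}_c(\rho)-\hat V^{\bar\pi}_c(\rho)|\le\Delta-\varepsilon_{\mathrm{opt}},\qquad|V^{\pi^*}_c(\rho)-\hat V^{\pi^*}_c(\rho)|\le\Delta.$$ Then (a) $V^{\bar\pi}_c(\rho)\ge b$, and (b) $$V^{\pi^*}_r(\rho)-V^{\bar\pi}_r(\rho)\le\frac{2\omega}{1-\gamma}+\varepsilon_{\mathrm{opt}}+2\Delta\lambda^*+|V^{\pi^*}_{r_p}(\rho)-\hat V^{\pi^*}_{r_p}(\rho)|+|\hat V^{\bar\pi}_{r_p}(\rho)-V^{\bar\pi}_{r_p}(\rho)|.$$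
   Context: A discounted CMDP $M=\langle\mathcal S,\mathcal A,\mathcal P,r,c,b,\rho,\gamma\rangle$ with finite state and action sets, reward $r:\mathcal S\times\mathcal A\to[0,1]$, constraint reward $c:\mathcal S\times\mathcal A\to[0,1]$, threshold $b$, initial distribution $\rho$, discount $\gamma\in[0,1)$. $V^\pi_g(\rho)$ is the discounted value of policy $\pi$ for reward $g$ under $\mathcal P$, $s_0\sim\rho$; hats denote values under an empirical kernel $\hat{\mathcal P}$. $r_p=r+\xi$ with $\xi(s,a)\in[0,\omega]$. $\pi^*$ is an optimal policy of $\max_\pi V^\pi_r(\rho)$ s.t. $V^\pi_c(\rho)\ge b$; $\hat\pi^*$ is an optimal policy of $\max_\pi\hat V^\pi_{r_p}(\rho)$ s.t. $\hat V^\pi_c(\rho)\ge b'$, and $\lambda^*\ge0$ its optimal dual variable, i.e. a minimizer over $\lambda\ge0$ of $\max_\pi[\hat V^\pi_{r_p}(\rho)+\lambda(\hat V^\pi_c(\rho)-b')]$ (strong duality holds). *)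

theory Defs
  imports "HOL-Analysis.Analysis"
begin

text \<open>A transition kernel is P s a s' (probability of moving to s' from s under a).
  A (stationary, randomized) policy is \<pi> s a (probability of action a in state s).\<close>

definition is_dist :: "('s::finite \<Rightarrow> real) \<Rightarrow> bool" where
  "is_dist \<rho> \<longleftrightarrow> (\<forall>s. 0 \<le> \<rho> s) \<and> (\<Sum>s\<in>UNIV. \<rho> s) = 1"

definition is_kernel :: "('s::finite \<Rightarrow> 'a::finite \<Rightarrow> 's \<Rightarrow> real) \<Rightarrow> bool" where
  "is_kernel P \<longleftrightarrow> (\<forall>s a. is_dist (P s a))"

definition is_policy :: "('s::finite \<Rightarrow> 'a::finite \<Rightarrow> real) \<Rightarrow> bool" where
  "is_policy \<pi> \<longleftrightarrow> (\<forall>s. is_dist (\<pi> s))"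

primrec state_dist ::
  "('s::finite \<Rightarrow> 'a::finite \<Rightarrow> 's \<Rightarrow> real) \<Rightarrow> ('s \<Rightarrow> 'a \<Rightarrow> real) \<Rightarrow> ('s \<Rightarrow> real) \<Rightarrow> nat \<Rightarrow> 's \<Rightarrow> real"
where
  "state_dist P \<pi> \<rho> 0 = \<rho>"
| "state_dist P \<pi> \<rho> (Suc t) =
     (\<lambda>s'. \<Sum>s\<in>UNIV. state_dist P \<pi> \<rho> t s * (\<Sum>a\<in>UNIV. \<pi> s a * P s a s'))"

definition value_fn ::
  "('s::finite \<Rightarrow> 'a::finite \<Rightarrow> 's \<Rightarrow> real) \<Rightarrow> real \<Rightarrow> ('s \<Rightarrow> real) \<Rightarrow> ('s \<Rightarrow> 'a \<Rightarrow> real)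
   \<Rightarrow> ('s \<Rightarrow> 'a \<Rightarrow> real) \<Rightarrow> real"
where
  "value_fn P \<gamma> \<rho> g \<pi> =
     (\<Sum>t. \<gamma> ^ t * (\<Sum>s\<in>UNIV. state_dist P \<pi> \<rho> t s * (\<Sum>a\<in>UNIV. \<pi> s a * g s a)))"

definition cmdp_optimal ::
  "('s::finite \<Rightarrow> 'a::finite \<Rightarrow> 's \<Rightarrow> real) \<Rightarrow> real \<Rightarrow> ('s \<Rightarrow> real) \<Rightarrow> ('s \<Rightarrow> 'a \<Rightarrow> real)
   \<Rightarrow> ('s \<Rightarrow> 'a \<Rightarrow> real) \<Rightarrow> real \<Rightarrow> ('s \<Rightarrow> 'a \<Rightarrow> real) \<Rightarrow> bool"
where
  "cmdp_optimal P \<gamma> \<rho> r c b \<pi>opt \<longleftrightarrow>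
     is_policy \<pi>opt \<and> value_fn P \<gamma> \<rho> c \<pi>opt \<ge> b \<and>
     (\<forall>\<pi>. is_policy \<pi> \<and> value_fn P \<gamma> \<rho> c \<pi> \<ge> b \<longrightarrow> value_fn P \<gamma> \<rho> r \<pi> \<le> value_fn P \<gamma> \<rho> r \<pi>opt)"

definition dual_fn ::
  "('s::finite \<Rightarrow> 'a::finite \<Rightarrow> 's \<Rightarrow> real) \<Rightarrow> real \<Rightarrow> ('s \<Rightarrow> real) \<Rightarrow> ('s \<Rightarrow> 'a \<Rightarrow> real)
   \<Rightarrow> ('s \<Rightarrow> 'a \<Rightarrow> real) \<Rightarrow> real \<Rightarrow> real \<Rightarrow> real"
where
  "dual_fn P \<gamma> \<rho> r c b lam =
     (SUP \<pi>\<in>{\<pi>. is_policy \<pi>}. value_fn P \<gamma> \<rho> r \<pi> + lam * (value_fn P \<gamma> \<rho> c \<pi> - b))"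

end

theory Submission
  imports Defs
begin


lemma sd_dist:
  assumes P: "is_kernel P" and pi: "is_policy \<pi>" and rho: "is_dist \<rho>"
  shows "is_dist (state_dist P \<pi> \<rho> t)"
proof (induction t)
  case 0 then show ?case using rho by simp
next
  case (Suc t)
  let ?d = "state_dist P \<pi> \<rho> t"
  have nn: "\<And>s. 0 \<le> ?d s" using Suc unfolding is_dist_def by auto
  have pn: "\<And>s a. 0 \<le> \<pi> s a" "\<And>s. (\<Sum>a\<in>UNIV. \<pi> s a) = 1"
    using pi unfolding is_policy_def is_dist_def by auto
  have kn: "\<And>s a s'. 0 \<le> P s a s'" "\<And>s a. (\<Sum>s'\<in>UNIV. P s a s') = 1"
    using P unfolding is_kernel_def is_dist_def by auto
  have "(\<Sum>s'\<in>UNIV. \<Sum>s\<in>UNIV. ?d s * (\<Sum>a\<in>UNIV. \<pi> s a * P s a s'))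
      = (\<Sum>s\<in>UNIV. ?d s * (\<Sum>a\<in>UNIV. \<pi> s a * (\<Sum>s'\<in>UNIV. P s a s')))"
  proof -
    have "(\<Sum>s'\<in>UNIV. \<Sum>s\<in>UNIV. ?d s * (\<Sum>a\<in>UNIV. \<pi> s a * P s a s'))
        = (\<Sum>s\<in>UNIV. \<Sum>s'\<in>UNIV. ?d s * (\<Sum>a\<in>UNIV. \<pi> s a * P s a s'))"
      by (rule sum.swap)
    also have "\<dots> = (\<Sum>s\<in>UNIV. ?d s * (\<Sum>s'\<in>UNIV. \<Sum>a\<in>UNIV. \<pi> s a * P s a s'))"
      by (simp add: sum_distrib_left)
    also have "\<dots> = (\<Sum>s\<in>UNIV. ?d s * (\<Sum>a\<in>UNIV. \<Sum>s'\<in>UNIV. \<pi> s a * P s a s'))"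
      by (intro sum.cong refl arg_cong[where f="\<lambda>x. ?d _ * x"] sum.swap)
    finally show ?thesis by (simp add: sum_distrib_left)
  qed
  also have "\<dots> = (\<Sum>s\<in>UNIV. ?d s)" using kn pn by simp
  also have "\<dots> = 1" using Suc unfolding is_dist_def by auto
  finally show ?case unfolding is_dist_def
    using nn pn kn by (auto intro!: sum_nonneg mult_nonneg_nonneg)
qed

lemma stage_bounds:
  assumes P: "is_kernel P" and pi: "is_policy \<pi>" and rho: "is_dist \<rho>"
    and g: "\<And>s a. m \<le> g s a \<and> g s a \<le> M"
  shows "m \<le> (\<Sum>s\<in>UNIV. state_dist P \<pi> \<rho> t s * (\<Sum>a\<in>UNIV. \<pi> s a * g s a))
       \<and> (\<Sum>s\<in>UNIV. state_dist P \<pi> \<rho> t s * (\<Sum>a\<in>UNIV. \<pi> s a * g s a)) \<le> M"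
proof -
  let ?d = "state_dist P \<pi> \<rho> t"
  have d: "\<And>s. 0 \<le> ?d s" "(\<Sum>s\<in>UNIV. ?d s) = 1"
    using sd_dist[OF P pi rho] unfolding is_dist_def by auto
  have pn: "\<And>s a. 0 \<le> \<pi> s a" "\<And>s. (\<Sum>a\<in>UNIV. \<pi> s a) = 1"
    using pi unfolding is_policy_def is_dist_def by auto
  have i1: "\<And>s. (\<Sum>a\<in>UNIV. \<pi> s a * g s a) \<le> M"
  proof -
    fix s
    have "(\<Sum>a\<in>UNIV. \<pi> s a * g s a) \<le> (\<Sum>a\<in>UNIV. \<pi> s a * M)"
      by (intro sum_mono mult_left_mono) (use g pn in auto)
    also have "\<dots> = M" using pn by (simp add: sum_distrib_right[symmetric])
    finally show "(\<Sum>a\<in>UNIV. \<pi> s a * g s a) \<le> M" .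
  qed
  have i2: "\<And>s. m \<le> (\<Sum>a\<in>UNIV. \<pi> s a * g s a)"
  proof -
    fix s
    have "(\<Sum>a\<in>UNIV. \<pi> s a * m) \<le> (\<Sum>a\<in>UNIV. \<pi> s a * g s a)"
      by (intro sum_mono mult_left_mono) (use g pn in auto)
    moreover have "(\<Sum>a\<in>UNIV. \<pi> s a * m) = m" using pn by (simp add: sum_distrib_right[symmetric])
    ultimately show "m \<le> (\<Sum>a\<in>UNIV. \<pi> s a * g s a)" by simp
  qed
  have "(\<Sum>s\<in>UNIV. ?d s * (\<Sum>a\<in>UNIV. \<pi> s a * g s a)) \<le> (\<Sum>s\<in>UNIV. ?d s * M)"
    by (intro sum_mono mult_left_mono) (use i1 d in auto)
  moreover have "(\<Sum>s\<in>UNIV. ?d s * M) = M" using d by (simp add: sum_distrib_right[symmetric])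
  moreover have "(\<Sum>s\<in>UNIV. ?d s * m) \<le> (\<Sum>s\<in>UNIV. ?d s * (\<Sum>a\<in>UNIV. \<pi> s a * g s a))"
    by (intro sum_mono mult_left_mono) (use i2 d in auto)
  moreover have "(\<Sum>s\<in>UNIV. ?d s * m) = m" using d by (simp add: sum_distrib_right[symmetric])
  ultimately show ?thesis by simp
qed

lemma value_summable:
  assumes P: "is_kernel P" and pi: "is_policy \<pi>" and rho: "is_dist \<rho>"
    and g: "\<And>s a. m \<le> g s a \<and> g s a \<le> M" and ga: "0 \<le> \<gamma>" "\<gamma> < 1"
  shows "summable (\<lambda>t. \<gamma> ^ t * (\<Sum>s\<in>UNIV. state_dist P \<pi> \<rho> t s * (\<Sum>a\<in>UNIV. \<pi> s a * g s a)))"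
proof (rule summable_comparison_test)
  let ?B = "max \<bar>m\<bar> \<bar>M\<bar>"
  show "\<exists>N. \<forall>n\<ge>N. norm (\<gamma> ^ n * (\<Sum>s\<in>UNIV. state_dist P \<pi> \<rho> n s * (\<Sum>a\<in>UNIV. \<pi> s a * g s a))) \<le> \<gamma>^n * ?B"
  proof (intro exI allI impI)
    fix n :: nat
    have "\<bar>(\<Sum>s\<in>UNIV. state_dist P \<pi> \<rho> n s * (\<Sum>a\<in>UNIV. \<pi> s a * g s a))\<bar> \<le> ?B"
      using stage_bounds[where g=g and m=m and M=M, OF P pi rho g, of n] by linarith
    then show "norm (\<gamma> ^ n * (\<Sum>s\<in>UNIV. state_dist P \<pi> \<rho> n s * (\<Sum>a\<in>UNIV. \<pi> s a * g s a))) \<le> \<gamma>^n * ?B"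
      using ga by (simp add: abs_mult mult_left_mono)
  qed
  show "summable (\<lambda>n. \<gamma>^n * ?B)" using ga by (intro summable_mult2) simp
qed

lemma value_bounds:
  assumes P: "is_kernel P" and pi: "is_policy \<pi>" and rho: "is_dist \<rho>"
    and g: "\<And>s a. 0 \<le> g s a \<and> g s a \<le> M" and ga: "0 \<le> \<gamma>" "\<gamma> < 1"
  shows "0 \<le> value_fn P \<gamma> \<rho> g \<pi> \<and> value_fn P \<gamma> \<rho> g \<pi> \<le> M / (1 - \<gamma>)"
proof -
  have S: "summable (\<lambda>t. \<gamma> ^ t * (\<Sum>s\<in>UNIV. state_dist P \<pi> \<rho> t s * (\<Sum>a\<in>UNIV. \<pi> s a * g s a)))"
    by (rule value_summable[where g=g and m=0 and M=M, OF P pi rho g ga])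
  have sb: "\<And>t. 0 \<le> (\<Sum>s\<in>UNIV. state_dist P \<pi> \<rho> t s * (\<Sum>a\<in>UNIV. \<pi> s a * g s a))
       \<and> (\<Sum>s\<in>UNIV. state_dist P \<pi> \<rho> t s * (\<Sum>a\<in>UNIV. \<pi> s a * g s a)) \<le> M"
    using stage_bounds[where g=g and m=0 and M=M, OF P pi rho g] by blast
  have "0 \<le> value_fn P \<gamma> \<rho> g \<pi>" unfolding value_fn_def
    using sb ga by (intro suminf_nonneg S) simp
  moreover have geo: "(\<lambda>t. \<gamma>^t * M) sums (M / (1 - \<gamma>))"
    using sums_mult2[OF geometric_sums[of \<gamma>], of M] ga by (simp add: field_simps)
  have "value_fn P \<gamma> \<rho> g \<pi> \<le> (\<Sum>t. \<gamma>^t * M)" unfolding value_fn_def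
    using sb ga geo by (intro suminf_le S) (auto intro: mult_left_mono sums_summable)
  ultimately show ?thesis using geo sums_unique by metis
qed

lemma value_add:
  assumes P: "is_kernel P" and pi: "is_policy \<pi>" and rho: "is_dist \<rho>"
    and g: "\<And>s a. ma \<le> g s a \<and> g s a \<le> Ma"
    and h: "\<And>s a. mb \<le> h s a \<and> h s a \<le> Mb" and ga: "0 \<le> \<gamma>" "\<gamma> < 1"
  shows "value_fn P \<gamma> \<rho> (\<lambda>s a. g s a + h s a) \<pi> = value_fn P \<gamma> \<rho> g \<pi> + value_fn P \<gamma> \<rho> h \<pi>"
proof -
  have e: "\<And>t. \<gamma> ^ t * (\<Sum>s\<in>UNIV. state_dist P \<pi> \<rho> t s * (\<Sum>a\<in>UNIV. \<pi> s a * (g s a + h s a)))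
     = \<gamma> ^ t * (\<Sum>s\<in>UNIV. state_dist P \<pi> \<rho> t s * (\<Sum>a\<in>UNIV. \<pi> s a * g s a))
     + \<gamma> ^ t * (\<Sum>s\<in>UNIV. state_dist P \<pi> \<rho> t s * (\<Sum>a\<in>UNIV. \<pi> s a * h s a))"
    by (simp add: distrib_left sum.distrib)
  show ?thesis unfolding value_fn_def e
    by (rule suminf_add[symmetric]; rule value_summable[OF P pi rho _ ga]) (use g h in auto)
qed

theorem mainTheorem9:
  fixes P Phat :: "'s::finite \<Rightarrow> 'a::finite \<Rightarrow> 's \<Rightarrow> real"
    and r c \<xi> :: "'s \<Rightarrow> 'a \<Rightarrow> real"
    and \<rho> :: "'s \<Rightarrow> real"
    and b b' \<gamma> \<omega> \<Delta> \<epsilon>opt lamstar :: real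
    and \<pi>star \<pi>hatstar \<pi>bar :: "'s \<Rightarrow> 'a \<Rightarrow> real"
  assumes P: "is_kernel P" and Phat: "is_kernel Phat"
    and r01: "\<And>s a. 0 \<le> r s a \<and> r s a \<le> 1"
    and c01: "\<And>s a. 0 \<le> c s a \<and> c s a \<le> 1"
    and \<xi>: "\<And>s a. 0 \<le> \<xi> s a \<and> \<xi> s a \<le> \<omega>"
    and \<rho>: "is_dist \<rho>"
    and \<gamma>: "0 \<le> \<gamma>" "\<gamma> < 1"
    and \<Delta>: "\<Delta> > 0" and eps: "\<epsilon>opt < \<Delta>" and b': "b' = b + \<Delta>"
    and opt: "cmdp_optimal P \<gamma> \<rho> r c b \<pi>star"
    and optHat: "cmdp_optimal Phat \<gamma> \<rho> (\<lambda>s a. r s a + \<xi> s a) c b' \<pi>hatstar"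
    and lam_nonneg: "lamstar \<ge> 0"
    and lam_min: "\<And>lam. lam \<ge> 0 \<Longrightarrow>
        dual_fn Phat \<gamma> \<rho> (\<lambda>s a. r s a + \<xi> s a) c b' lamstar
          \<le> dual_fn Phat \<gamma> \<rho> (\<lambda>s a. r s a + \<xi> s a) c b' lam"
    and strong_duality:
      "dual_fn Phat \<gamma> \<rho> (\<lambda>s a. r s a + \<xi> s a) c b' lamstar
         = value_fn Phat \<gamma> \<rho> (\<lambda>s a. r s a + \<xi> s a) \<pi>hatstar"
    and pibar: "is_policy \<pi>bar"
    and pibar_r: "value_fn Phat \<gamma> \<rho> (\<lambda>s a. r s a + \<xi> s a) \<pi>bar
                    \<ge> value_fn Phat \<gamma> \<rho> (\<lambda>s a. r s a + \<xi> s a) \<pi>hatstar - \<epsilon>opt"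
    and pibar_c: "value_fn Phat \<gamma> \<rho> c \<pi>bar \<ge> b' - \<epsilon>opt"
    and gap_bar: "\<bar>value_fn P \<gamma> \<rho> c \<pi>bar - value_fn Phat \<gamma> \<rho> c \<pi>bar\<bar> \<le> \<Delta> - \<epsilon>opt"
    and gap_star: "\<bar>value_fn P \<gamma> \<rho> c \<pi>star - value_fn Phat \<gamma> \<rho> c \<pi>star\<bar> \<le> \<Delta>"
  shows "value_fn P \<gamma> \<rho> c \<pi>bar \<ge> b
    \<and> value_fn P \<gamma> \<rho> r \<pi>star - value_fn P \<gamma> \<rho> r \<pi>bar
        \<le> 2 * \<omega> / (1 - \<gamma>) + \<epsilon>opt + 2 * \<Delta> * lamstar
          + \<bar>value_fn P \<gamma> \<rho> (\<lambda>s a. r s a + \<xi> s a) \<pi>star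
               - value_fn Phat \<gamma> \<rho> (\<lambda>s a. r s a + \<xi> s a) \<pi>star\<bar>
          + \<bar>value_fn Phat \<gamma> \<rho> (\<lambda>s a. r s a + \<xi> s a) \<pi>bar
               - value_fn P \<gamma> \<rho> (\<lambda>s a. r s a + \<xi> s a) \<pi>bar\<bar>"
  proof -
  define rp where "rp = (\<lambda>s a. r s a + \<xi> s a)"
  have om: "0 \<le> \<omega>" using \<xi> by (meson order_trans)
  have pistar: "is_policy \<pi>star" and cstar: "value_fn P \<gamma> \<rho> c \<pi>star \<ge> b"
    using opt unfolding cmdp_optimal_def by auto
  have pihat: "is_policy \<pi>hatstar" using optHat unfolding cmdp_optimal_def by auto
  have rp01: "\<And>s a. 0 \<le> rp s a \<and> rp s a \<le> 1 + \<omega>" unfolding rp_def using r01 \<xi> by (smt (verit))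
  have cb: "\<And>\<pi>::'s\<Rightarrow>'a\<Rightarrow>real. is_policy \<pi> \<Longrightarrow> 0 \<le> value_fn Phat \<gamma> \<rho> c \<pi> \<and> value_fn Phat \<gamma> \<rho> c \<pi> \<le> 1 / (1 - \<gamma>)"
    using value_bounds[where g=c and M=1, OF Phat _ \<rho> c01 \<gamma>] by blast
  have rb: "\<And>\<pi>::'s\<Rightarrow>'a\<Rightarrow>real. is_policy \<pi> \<Longrightarrow> 0 \<le> value_fn Phat \<gamma> \<rho> rp \<pi> \<and> value_fn Phat \<gamma> \<rho> rp \<pi> \<le> (1+\<omega>) / (1 - \<gamma>)"
    using value_bounds[where g=rp and M="1+\<omega>", OF Phat _ \<rho> rp01 \<gamma>] by blast
  have bdd: "bdd_above ((\<lambda>\<pi>. value_fn Phat \<gamma> \<rho> rp \<pi> + lamstar * (value_fn Phat \<gamma> \<rho> c \<pi> - b')) ` {\<pi>. is_policy \<pi>})"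
  proof (rule bdd_aboveI2)
    fix \<pi> :: "'s\<Rightarrow>'a\<Rightarrow>real" assume "\<pi> \<in> {\<pi>. is_policy \<pi>}"
    then have "value_fn Phat \<gamma> \<rho> rp \<pi> \<le> (1+\<omega>) / (1 - \<gamma>)" "value_fn Phat \<gamma> \<rho> c \<pi> \<le> 1 / (1 - \<gamma>)"
      using rb cb by auto
    moreover have "lamstar * (value_fn Phat \<gamma> \<rho> c \<pi> - b') \<le> lamstar * (1 / (1 - \<gamma>) - b')"
      using calculation(2) lam_nonneg by (intro mult_left_mono) auto
    ultimately show "value_fn Phat \<gamma> \<rho> rp \<pi> + lamstar * (value_fn Phat \<gamma> \<rho> c \<pi> - b')
       \<le> (1+\<omega>) / (1 - \<gamma>) + lamstar * (1 / (1 - \<gamma>) - b')" by linarith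
  qed
  have D: "value_fn Phat \<gamma> \<rho> rp \<pi>star + lamstar * (value_fn Phat \<gamma> \<rho> c \<pi>star - b')
      \<le> value_fn Phat \<gamma> \<rho> rp \<pi>hatstar"
    using strong_duality[folded rp_def] pistar bdd unfolding dual_fn_def
    by (metis (no_types, lifting) cSUP_upper mem_Collect_eq)
  have "lamstar * (value_fn Phat \<gamma> \<rho> c \<pi>star - b') \<ge> lamstar * (- 2 * \<Delta>)"
    using gap_star cstar b' lam_nonneg by (intro mult_left_mono) auto
  then have D2: "value_fn Phat \<gamma> \<rho> rp \<pi>star - 2 * \<Delta> * lamstar \<le> value_fn Phat \<gamma> \<rho> rp \<pi>bar + \<epsilon>opt"
    using D pibar_r[folded rp_def] by (simp add: algebra_simps)
  have add1: "\<And>\<pi>::'s\<Rightarrow>'a\<Rightarrow>real. is_policy \<pi> \<Longrightarrow> value_fn P \<gamma> \<rho> rp \<pi> = value_fn P \<gamma> \<rho> r \<pi> + value_fn P \<gamma> \<rho> \<xi> \<pi>"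
    unfolding rp_def using value_add[where g=r and h=\<xi> and ma=0 and Ma=1 and mb=0 and Mb=\<omega>, OF P _ \<rho> r01 \<xi> \<gamma>] by blast
  have xb: "\<And>\<pi>::'s\<Rightarrow>'a\<Rightarrow>real. is_policy \<pi> \<Longrightarrow> 0 \<le> value_fn P \<gamma> \<rho> \<xi> \<pi> \<and> value_fn P \<gamma> \<rho> \<xi> \<pi> \<le> \<omega> / (1 - \<gamma>)"
    using value_bounds[where g=\<xi> and M=\<omega>, OF P _ \<rho> \<xi> \<gamma>] by blast
  have "0 \<le> \<omega> / (1 - \<gamma>)" using om \<gamma> by simp
  moreover have "2 * \<omega> / (1 - \<gamma>) = 2 * (\<omega> / (1 - \<gamma>))" by simp
  ultimately show ?thesis
    using add1[OF pistar] add1[OF pibar] xb[OF pistar] xb[OF pibar] D2 gap_bar pibar_c b'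
    unfolding rp_def[symmetric]
    by (smt (verit))
qed

end
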